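(* Let $A$ be a ring and let $J$ be either the prime radical, the upper nilradical, or the Jacobson radical of $A$. If $\varphi: A \to A$ is a surjective ring endomorphism and $A/J$ is Hopfian, then $\ker\varphi \subseteq J$.
   Context: The prime radical of $A$ is the intersection of all prime ideals of $A$; the upper nilradical is the largest nil two-sided ideal of $A$; the Jacobson radical is the intersection of all maximal left ideals of $A$. A ring $R$ is \emph{Hopfian} if $R$ is not isomorphic (as a ring) to $R/I$ for any nonzero two-sided ideal $I \triangleleft R$; equivalently, every surjective ring endomorphism of $R$ is injective. *)

theory Defs
  imports "HOL-Algebra.QuotRing"
begin

text \<open>Rings are associative unital (not necessarily commutative) rings in the
sense of the HOL-Algebra locale ring; ideal denotes a two-sided ideal.\<close>

definition left_ideal :: "('a, 'b) ring_scheme \<Rightarrow> 'a set \<Rightarrow> bool" where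
  "left_ideal R L \<longleftrightarrow> additive_subgroup L R \<and>
     (\<forall>r \<in> carrier R. \<forall>x \<in> L. r \<otimes>\<^bsub>R\<^esub> x \<in> L)"

definition maximal_left_ideal :: "('a, 'b) ring_scheme \<Rightarrow> 'a set \<Rightarrow> bool" where
  "maximal_left_ideal R M \<longleftrightarrow> left_ideal R M \<and> M \<noteq> carrier R \<and>
     (\<forall>L. left_ideal R L \<and> M \<subseteq> L \<and> L \<noteq> carrier R \<longrightarrow> L = M)"

text \<open>Prime ideal of a (possibly noncommutative) ring: a proper two-sided ideal P
such that for two-sided ideals I, J, IJ \<subseteq> P implies I \<subseteq> P or J \<subseteq> P.
(IJ \<subseteq> P is written elementwise, which is the same since P is additively closed.)\<close>

definition nc_prime_ideal :: "('a, 'b) ring_scheme \<Rightarrow> 'a set \<Rightarrow> bool" where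
  "nc_prime_ideal R P \<longleftrightarrow> ideal P R \<and> P \<noteq> carrier R \<and>
     (\<forall>I J. ideal I R \<and> ideal J R \<and> (\<forall>a \<in> I. \<forall>b \<in> J. a \<otimes>\<^bsub>R\<^esub> b \<in> P)
        \<longrightarrow> I \<subseteq> P \<or> J \<subseteq> P)"

definition prime_radical :: "('a, 'b) ring_scheme \<Rightarrow> 'a set" where
  "prime_radical R = {x \<in> carrier R. \<forall>P. nc_prime_ideal R P \<longrightarrow> x \<in> P}"

definition jacobson_radical :: "('a, 'b) ring_scheme \<Rightarrow> 'a set" where
  "jacobson_radical R = {x \<in> carrier R. \<forall>M. maximal_left_ideal R M \<longrightarrow> x \<in> M}"

definition nil_set :: "('a, 'b) ring_scheme \<Rightarrow> 'a set \<Rightarrow> bool" where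
  "nil_set R I \<longleftrightarrow> (\<forall>x \<in> I. \<exists>n::nat. x [^]\<^bsub>R\<^esub> n = \<zero>\<^bsub>R\<^esub>)"

definition is_upper_nilradical :: "('a, 'b) ring_scheme \<Rightarrow> 'a set \<Rightarrow> bool" where
  "is_upper_nilradical R J \<longleftrightarrow> ideal J R \<and> nil_set R J \<and>
     (\<forall>I. ideal I R \<and> nil_set R I \<longrightarrow> I \<subseteq> J)"

definition hopfian :: "('a, 'b) ring_scheme \<Rightarrow> bool" where
  "hopfian R \<longleftrightarrow> (\<forall>f \<in> ring_hom R R. f ` carrier R = carrier R \<longrightarrow> inj_on f (carrier R))"

end

theory Submission
  imports Defs
begin


lemma psi_coset:
  fixes A (structure)
  assumes R: "ring A" and I: "ideal J A" and h: "\<phi> \<in> ring_hom A A"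
    and inv: "\<phi> ` J \<subseteq> J" and x: "x \<in> carrier A"
  shows "the_elem ((\<lambda>y. J +>\<^bsub>A\<^esub> \<phi> y) ` (J +>\<^bsub>A\<^esub> x)) = J +>\<^bsub>A\<^esub> \<phi> x"
proof -
  interpret ring A by fact
  interpret ideal J A by fact
  interpret ring_hom_ring A A \<phi> using ring_hom_ringI2[OF R R h] .
  have "(\<lambda>y. J +> \<phi> y) ` (J +> x) = {J +> \<phi> x}"
  proof
    show "{J +> \<phi> x} \<subseteq> (\<lambda>y. J +> \<phi> y) ` (J +> x)" using a_rcos_self[OF x] by auto
    show "(\<lambda>y. J +> \<phi> y) ` (J +> x) \<subseteq> {J +> \<phi> x}"
    proof clarify
      fix y assume y: "y \<in> J +> x"
      have yc: "y \<in> carrier A" using y x a_elemrcos_carrier by blast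
      have "J +> x = J +> y" using a_repr_independence' y x by blast
      hence "y \<ominus> x \<in> J" using quotient_eq_iff_same_a_r_cos[OF I yc x] by simp
      hence "\<phi> (y \<ominus> x) \<in> J" using inv by blast
      hence "\<phi> y \<ominus> \<phi> x \<in> J" using yc x by (simp add: a_minus_def)
      thus "J +> \<phi> y = J +> \<phi> x"
        using quotient_eq_iff_same_a_r_cos[OF I] yc x ring_hom_closed[OF h] by blast
    qed
  qed
  thus ?thesis by simp
qed

lemma hopf_reduce:
  fixes A (structure)
  assumes R: "ring A" and I: "ideal J A" and h: "\<phi> \<in> ring_hom A A"
    and surj: "\<phi> ` carrier A = carrier A"
    and inv: "\<phi> ` J \<subseteq> J" and hop: "hopfian (A Quot J)"
  shows "a_kernel A A \<phi> \<subseteq> J"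
proof -
  interpret ring A by fact
  interpret ideal J A by fact
  interpret ring_hom_ring A A \<phi> using ring_hom_ringI2[OF R R h] .
  define \<psi> where "\<psi> X = the_elem ((\<lambda>y. J +> \<phi> y) ` X)" for X
  have ps: "\<psi> (J +> x) = J +> \<phi> x" if "x \<in> carrier A" for x
    unfolding \<psi>_def using psi_coset[OF R I h inv that] .
  have pi: "(+>) J \<in> ring_hom A (A Quot J)" by (rule rcos_ring_hom)
  have carrQ: "carrier (A Quot J) = (+>) J ` carrier A"
    unfolding FactRing_def A_RCOSETS_def' by simp blast
  have hc: "\<phi> x \<in> carrier A" if "x \<in> carrier A" for x using ring_hom_closed[OF h that] .
  have "\<psi> \<in> ring_hom (A Quot J) (A Quot J)"
  proof (rule ring_hom_memI)
    fix X assume "X \<in> carrier (A Quot J)"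
    then obtain x where x: "x \<in> carrier A" "X = J +> x" using carrQ by auto
    show "\<psi> X \<in> carrier (A Quot J)" using x ps hc carrQ by auto
  next
    fix X Y assume "X \<in> carrier (A Quot J)" "Y \<in> carrier (A Quot J)"
    then obtain x y where x: "x \<in> carrier A" "X = J +> x" and y: "y \<in> carrier A" "Y = J +> y"
      using carrQ by auto
    have "X \<otimes>\<^bsub>A Quot J\<^esub> Y = J +> (x \<otimes> y)" using ring_hom_mult[OF pi x(1) y(1)] x y by simp
    hence "\<psi> (X \<otimes>\<^bsub>A Quot J\<^esub> Y) = J +> (\<phi> x \<otimes> \<phi> y)" using ps x y by simp
    also have "\<dots> = \<psi> X \<otimes>\<^bsub>A Quot J\<^esub> \<psi> Y"
      using ring_hom_mult[OF pi hc[OF x(1)] hc[OF y(1)]] ps x y by simp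
    finally show "\<psi> (X \<otimes>\<^bsub>A Quot J\<^esub> Y) = \<psi> X \<otimes>\<^bsub>A Quot J\<^esub> \<psi> Y" .
    have "X \<oplus>\<^bsub>A Quot J\<^esub> Y = J +> (x \<oplus> y)" using ring_hom_add[OF pi x(1) y(1)] x y by simp
    hence "\<psi> (X \<oplus>\<^bsub>A Quot J\<^esub> Y) = J +> (\<phi> x \<oplus> \<phi> y)" using ps x y by simp
    also have "\<dots> = \<psi> X \<oplus>\<^bsub>A Quot J\<^esub> \<psi> Y"
      using ring_hom_add[OF pi hc[OF x(1)] hc[OF y(1)]] ps x y by simp
    finally show "\<psi> (X \<oplus>\<^bsub>A Quot J\<^esub> Y) = \<psi> X \<oplus>\<^bsub>A Quot J\<^esub> \<psi> Y" .
  next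
    show "\<psi> \<one>\<^bsub>A Quot J\<^esub> = \<one>\<^bsub>A Quot J\<^esub>"
      using ring_hom_one[OF pi] ps[OF one_closed] by simp
  qed
  moreover have "\<psi> ` carrier (A Quot J) = carrier (A Quot J)"
  proof
    show "\<psi> ` carrier (A Quot J) \<subseteq> carrier (A Quot J)" using ps hc carrQ by auto
    show "carrier (A Quot J) \<subseteq> \<psi> ` carrier (A Quot J)"
    proof
      fix X assume "X \<in> carrier (A Quot J)"
      then obtain y where y: "y \<in> carrier A" "X = J +> y" using carrQ by auto
      then obtain x where x: "x \<in> carrier A" "y = \<phi> x" using surj by blast
      show "X \<in> \<psi> ` carrier (A Quot J)" using x y ps carrQ by auto
    qed
  qed
  ultimately have inj: "inj_on \<psi> (carrier (A Quot J))" using hop unfolding hopfian_def by blast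
  show ?thesis
  proof
    fix x assume "x \<in> a_kernel A A \<phi>"
    hence x: "x \<in> carrier A" "\<phi> x = \<zero>" unfolding a_kernel_def' by simp_all
    have "\<psi> (J +> x) = \<psi> (J +> \<zero>)" using ps x by simp
    moreover have "J +> x \<in> carrier (A Quot J)" "J +> \<zero> \<in> carrier (A Quot J)"
      unfolding carrQ using x(1) by auto
    ultimately have "J +> x = J +> \<zero>" using inj_onD[OF inj] by blast
    moreover have z: "\<zero> \<in> carrier A" by simp
    ultimately have "x \<ominus> \<zero> \<in> J" using quotient_eq_iff_same_a_r_cos[OF I x(1) z] by simp
    moreover have "x \<ominus> \<zero> = x" using x(1) by (simp add: a_minus_def)
    ultimately show "x \<in> J" by simp
  qed
qed



lemma (in ring) addsubI:
  assumes "H \<subseteq> carrier R" "\<zero> \<in> H" "\<And>a b. a \<in> H \<Longrightarrow> b \<in> H \<Longrightarrow> a \<oplus> b \<in> H"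
    "\<And>a. a \<in> H \<Longrightarrow> \<ominus> a \<in> H"
  shows "additive_subgroup H R"
  apply (rule additive_subgroupI)
  apply (rule subgroup.intro)
  using assms by (auto simp: a_inv_def[symmetric])

lemma (in ring) ideal_Inter_carrier:
  assumes "\<And>P. Q P \<Longrightarrow> ideal P R"
  shows "ideal {x \<in> carrier R. \<forall>P. Q P \<longrightarrow> x \<in> P} R"
proof (rule idealI[OF ring_axioms])
  show "subgroup {x \<in> carrier R. \<forall>P. Q P \<longrightarrow> x \<in> P} (add_monoid R)"
    apply (rule additive_subgroup.a_subgroup, rule addsubI)
    using additive_subgroup.a_closed[OF ideal.axioms(1)[OF assms]]
      additive_subgroup.zero_closed[OF ideal.axioms(1)[OF assms]]
      additive_subgroup.a_inv_closed[OF ideal.axioms(1)[OF assms]] by auto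
  fix a x assume "a \<in> {x \<in> carrier R. \<forall>P. Q P \<longrightarrow> x \<in> P}" "x \<in> carrier R"
  thus "x \<otimes> a \<in> {x \<in> carrier R. \<forall>P. Q P \<longrightarrow> x \<in> P}"
     "a \<otimes> x \<in> {x \<in> carrier R. \<forall>P. Q P \<longrightarrow> x \<in> P}"
    using ideal.I_l_closed[OF assms] ideal.I_r_closed[OF assms] by auto
qed

lemma img_ideal:
  fixes A (structure)
  assumes R: "ring A" and h: "\<phi> \<in> ring_hom A A" and surj: "\<phi> ` carrier A = carrier A"
    and I: "ideal I A"
  shows "ideal (\<phi> ` I) A"
proof -
  interpret ring A by fact
  interpret ring_hom_ring A A \<phi> using ring_hom_ringI2[OF R R h] .
  have Ic: "I \<subseteq> carrier A" using ideal.Icarr[OF I] by blast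
  show ?thesis
  proof (rule idealI[OF R])
    show "subgroup (\<phi> ` I) (add_monoid A)"
      by (rule img_is_add_subgroup[OF additive_subgroup.a_subgroup[OF ideal.axioms(1)[OF I]]])
    fix a x assume a: "a \<in> \<phi> ` I" and x: "x \<in> carrier A"
    obtain i where i: "i \<in> I" "a = \<phi> i" using a by blast
    obtain y where y: "y \<in> carrier A" "x = \<phi> y" using x surj by blast
    have ic: "i \<in> carrier A" using i Ic by blast
    have "x \<otimes> a = \<phi> (y \<otimes> i)" using i y ic by (simp del: )
    moreover have "y \<otimes> i \<in> I" using ideal.I_l_closed[OF I i(1) y(1)] .
    ultimately show "x \<otimes> a \<in> \<phi> ` I" by blast
    have "a \<otimes> x = \<phi> (i \<otimes> y)" using i y ic by (simp del: )
    moreover have "i \<otimes> y \<in> I" using ideal.I_r_closed[OF I i(1) y(1)] .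
    ultimately show "a \<otimes> x \<in> \<phi> ` I" by blast
  qed
qed

lemma img_left_ideal:
  fixes A (structure)
  assumes R: "ring A" and h: "\<phi> \<in> ring_hom A A" and surj: "\<phi> ` carrier A = carrier A"
    and I: "left_ideal A I"
  shows "left_ideal A (\<phi> ` I)"
proof -
  interpret ring A by fact
  interpret ring_hom_ring A A \<phi> using ring_hom_ringI2[OF R R h] .
  have sI: "additive_subgroup I A" using I unfolding left_ideal_def by blast
  have Ic: "I \<subseteq> carrier A" using additive_subgroup.a_subset[OF sI] .
  have "subgroup (\<phi> ` I) (add_monoid A)"
    by (rule img_is_add_subgroup[OF additive_subgroup.a_subgroup[OF sI]])
  moreover have "\<forall>x\<in>carrier A. \<forall>a\<in>\<phi> ` I. x \<otimes> a \<in> \<phi> ` I"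
  proof (intro ballI)
    fix a x assume a: "a \<in> \<phi> ` I" and x: "x \<in> carrier A"
    obtain i where i: "i \<in> I" "a = \<phi> i" using a by blast
    obtain y where y: "y \<in> carrier A" "x = \<phi> y" using x surj by blast
    have ic: "i \<in> carrier A" using i Ic by blast
    have "x \<otimes> a = \<phi> (y \<otimes> i)" using i y ic by (simp del: )
    moreover have "y \<otimes> i \<in> I" using I i(1) y(1) unfolding left_ideal_def by blast
    ultimately show "x \<otimes> a \<in> \<phi> ` I" by blast
  qed
  ultimately show ?thesis unfolding left_ideal_def using additive_subgroupI by blast
qed

lemma vimage_left_ideal:
  fixes A (structure)
  assumes R: "ring A" and h: "\<phi> \<in> ring_hom A A" and I: "left_ideal A I"
  shows "left_ideal A {x \<in> carrier A. \<phi> x \<in> I}"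
proof -
  interpret ring A by fact
  interpret ring_hom_ring A A \<phi> using ring_hom_ringI2[OF R R h] .
  have sI: "additive_subgroup I A" using I unfolding left_ideal_def by blast
  have "additive_subgroup {x \<in> carrier A. \<phi> x \<in> I} A"
    by (rule addsubI) (auto simp: additive_subgroup.a_closed[OF sI]
        additive_subgroup.zero_closed[OF sI] additive_subgroup.a_inv_closed[OF sI])
  moreover have "\<forall>r\<in>carrier A. \<forall>x\<in>{x \<in> carrier A. \<phi> x \<in> I}. r \<otimes> x \<in> {x \<in> carrier A. \<phi> x \<in> I}"
    using I unfolding left_ideal_def by auto
  ultimately show ?thesis unfolding left_ideal_def by blast
qed

lemma left_ideal_one:
  fixes A (structure)
  assumes R: "ring A" and L: "left_ideal A L" and "\<one> \<in> L"
  shows "L = carrier A"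
proof -
  interpret ring A by fact
  have "L \<subseteq> carrier A" using L additive_subgroup.a_subset unfolding left_ideal_def by blast
  moreover have "b \<in> L" if "b \<in> carrier A" for b
    using L assms(3) that unfolding left_ideal_def by (metis r_one)
  ultimately show ?thesis by blast
qed



lemma prime_vimage:
  fixes A (structure)
  assumes R: "ring A" and h: "\<phi> \<in> ring_hom A A" and surj: "\<phi> ` carrier A = carrier A"
    and P: "nc_prime_ideal A P"
  shows "nc_prime_ideal A {x \<in> carrier A. \<phi> x \<in> P}"
proof -
  interpret ring A by fact
  interpret ring_hom_ring A A \<phi> using ring_hom_ringI2[OF R R h] .
  have PI: "ideal P A" and Pn: "P \<noteq> carrier A" using P unfolding nc_prime_ideal_def by auto
  have "ideal {x \<in> carrier A. \<phi> x \<in> P} A" by (rule ideal_vimage[OF PI])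
  moreover have "{x \<in> carrier A. \<phi> x \<in> P} \<noteq> carrier A"
  proof
    assume "{x \<in> carrier A. \<phi> x \<in> P} = carrier A"
    hence "\<one> \<in> P" using one_closed by (metis (no_types, lifting) hom_one mem_Collect_eq)
    thus False using ideal.one_imp_carrier[OF PI] Pn by simp
  qed
  moreover have "I \<subseteq> {x \<in> carrier A. \<phi> x \<in> P} \<or> K \<subseteq> {x \<in> carrier A. \<phi> x \<in> P}"
    if I: "ideal I A" and K: "ideal K A"
      and prod: "\<forall>a\<in>I. \<forall>b\<in>K. a \<otimes> b \<in> {x \<in> carrier A. \<phi> x \<in> P}" for I K
  proof -
    have "\<forall>a\<in>\<phi> ` I. \<forall>b\<in>\<phi> ` K. a \<otimes> b \<in> P"
    proof (intro ballI)
      fix a b assume "a \<in> \<phi> ` I" "b \<in> \<phi> ` K"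
      then obtain i k where i: "i \<in> I" "a = \<phi> i" and k: "k \<in> K" "b = \<phi> k" by blast
      have "i \<in> carrier A" "k \<in> carrier A" using ideal.Icarr[OF I i(1)] ideal.Icarr[OF K k(1)] .
      moreover have "\<phi> (i \<otimes> k) \<in> P" using prod i(1) k(1) by blast
      ultimately show "a \<otimes> b \<in> P" using i k by simp
    qed
    hence "\<phi> ` I \<subseteq> P \<or> \<phi> ` K \<subseteq> P"
      using P img_ideal[OF R h surj I] img_ideal[OF R h surj K] unfolding nc_prime_ideal_def by blast
    thus ?thesis using ideal.Icarr[OF I] ideal.Icarr[OF K] by blast
  qed
  ultimately show ?thesis unfolding nc_prime_ideal_def by blast
qed

lemma prime_radical_ideal:
  fixes A (structure)
  assumes R: "ring A"
  shows "ideal (prime_radical A) A"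
  unfolding prime_radical_def
  by (rule ring.ideal_Inter_carrier[OF R]) (simp add: nc_prime_ideal_def)

lemma prime_radical_inv:
  fixes A (structure)
  assumes R: "ring A" and h: "\<phi> \<in> ring_hom A A" and surj: "\<phi> ` carrier A = carrier A"
  shows "\<phi> ` prime_radical A \<subseteq> prime_radical A"
proof
  fix y assume "y \<in> \<phi> ` prime_radical A"
  then obtain x where x: "x \<in> carrier A" "\<forall>P. nc_prime_ideal A P \<longrightarrow> x \<in> P" "y = \<phi> x"
    unfolding prime_radical_def by blast
  have "\<phi> x \<in> P" if "nc_prime_ideal A P" for P
    using x(2) prime_vimage[OF R h surj that] by blast
  moreover have "\<phi> x \<in> carrier A" using ring_hom_closed[OF h x(1)] .
  ultimately show "y \<in> prime_radical A" unfolding prime_radical_def using x(3) by blast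
qed

lemma nil_inv:
  fixes A (structure)
  assumes R: "ring A" and h: "\<phi> \<in> ring_hom A A" and surj: "\<phi> ` carrier A = carrier A"
    and J: "is_upper_nilradical A J"
  shows "\<phi> ` J \<subseteq> J"
proof -
  interpret ring A by fact
  interpret ring_hom_ring A A \<phi> using ring_hom_ringI2[OF R R h] .
  have JI: "ideal J A" and Jn: "nil_set A J" using J unfolding is_upper_nilradical_def by auto
  have "nil_set A (\<phi> ` J)" unfolding nil_set_def
  proof
    fix y assume "y \<in> \<phi> ` J"
    then obtain x where x: "x \<in> J" "y = \<phi> x" by blast
    obtain n :: nat where n: "x [^] n = \<zero>" using Jn x(1) unfolding nil_set_def by blast
    have "y [^] n = \<phi> (x [^] n)" using x hom_nat_pow ideal.Icarr[OF JI x(1)] by simp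
    thus "\<exists>n::nat. y [^] n = \<zero>" using n by auto
  qed
  thus ?thesis using J img_ideal[OF R h surj JI] unfolding is_upper_nilradical_def by blast
qed



lemma left_idealD:
  fixes A (structure)
  assumes "left_ideal A L"
  shows "additive_subgroup L A" "L \<subseteq> carrier A" "\<And>s x. s \<in> carrier A \<Longrightarrow> x \<in> L \<Longrightarrow> s \<otimes> x \<in> L"
  using assms additive_subgroup.a_subset unfolding left_ideal_def by blast+

lemma colon_maximal:
  fixes A (structure)
  assumes R: "ring A" and M: "maximal_left_ideal A M" and r: "r \<in> carrier A" and rM: "r \<notin> M"
  shows "maximal_left_ideal A {a \<in> carrier A. a \<otimes> r \<in> M}"
proof -
  interpret ring A by fact
  define Q where "Q = {a \<in> carrier A. a \<otimes> r \<in> M}"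
  have MLi: "left_ideal A M" and Mn: "M \<noteq> carrier A"
    and Mmax: "\<And>L. left_ideal A L \<Longrightarrow> M \<subseteq> L \<Longrightarrow> L \<noteq> carrier A \<Longrightarrow> L = M"
    using M unfolding maximal_left_ideal_def by auto
  note sM = left_idealD(1)[OF MLi] and Mc = left_idealD(2)[OF MLi] and Ml = left_idealD(3)[OF MLi]
  have QL: "left_ideal A Q"
  proof -
    have "additive_subgroup Q A"
    proof (rule addsubI)
      show "Q \<subseteq> carrier A" unfolding Q_def by blast
      show "\<zero> \<in> Q" unfolding Q_def using r additive_subgroup.zero_closed[OF sM] by simp
      fix a b assume "a \<in> Q" "b \<in> Q"
      thus "a \<oplus> b \<in> Q" unfolding Q_def using r additive_subgroup.a_closed[OF sM]
        by (simp add: l_distr)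
    next
      fix a assume "a \<in> Q"
      thus "\<ominus> a \<in> Q" unfolding Q_def using r additive_subgroup.a_inv_closed[OF sM]
        by (simp add: l_minus)
    qed
    moreover have "\<forall>s\<in>carrier A. \<forall>x\<in>Q. s \<otimes> x \<in> Q"
      unfolding Q_def using r Ml by (simp add: m_assoc)
    ultimately show ?thesis unfolding left_ideal_def by blast
  qed
  have Qn: "Q \<noteq> carrier A"
  proof
    assume "Q = carrier A"
    hence "\<one> \<in> Q" by simp
    thus False unfolding Q_def using r rM by simp
  qed
  have "L = Q" if L: "left_ideal A L" and QsL: "Q \<subseteq> L" and Ln: "L \<noteq> carrier A" for L
  proof (rule ccontr)
    assume "L \<noteq> Q"
    then obtain l where l: "l \<in> L" "l \<notin> Q" using QsL by blast
    note sL = left_idealD(1)[OF L] and Lc = left_idealD(2)[OF L] and Ll = left_idealD(3)[OF L]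
    have lc: "l \<in> carrier A" using l Lc by blast
    have lr: "l \<otimes> r \<notin> M" using l lc unfolding Q_def by blast
    define N where "N = {x \<in> carrier A. \<exists>a\<in>L. \<exists>m\<in>M. x = a \<otimes> r \<oplus> m}"
    have NL: "left_ideal A N"
    proof -
      have "additive_subgroup N A"
      proof (rule addsubI)
        show "N \<subseteq> carrier A" unfolding N_def by blast
        show "\<zero> \<in> N" unfolding N_def
          using r additive_subgroup.zero_closed[OF sM] additive_subgroup.zero_closed[OF sL]
          by (intro CollectI conjI zero_closed bexI[of _ \<zero>]) simp_all
        fix x y assume "x \<in> N" "y \<in> N"
        then obtain a m b n where a: "a \<in> L" "m \<in> M" "x = a \<otimes> r \<oplus> m"
          and b: "b \<in> L" "n \<in> M" "y = b \<otimes> r \<oplus> n" and xc: "x \<in> carrier A" "y \<in> carrier A"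
          unfolding N_def by blast
        have ac: "a \<in> carrier A" "b \<in> carrier A" "m \<in> carrier A" "n \<in> carrier A"
          using a b Lc Mc by auto
        have "x \<oplus> y = (a \<oplus> b) \<otimes> r \<oplus> (m \<oplus> n)"
          using a b ac r by (simp add: l_distr a_ac)
        thus "x \<oplus> y \<in> N" unfolding N_def using xc a b
            additive_subgroup.a_closed[OF sM] additive_subgroup.a_closed[OF sL] by blast
      next
        fix x assume "x \<in> N"
        then obtain a m where a: "a \<in> L" "m \<in> M" "x = a \<otimes> r \<oplus> m" and xc: "x \<in> carrier A"
          unfolding N_def by blast
        have ac: "a \<in> carrier A" "m \<in> carrier A" using a Lc Mc by auto
        have "\<ominus> x = (\<ominus> a) \<otimes> r \<oplus> (\<ominus> m)"
          using a ac r by (simp add: l_minus minus_add)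
        thus "\<ominus> x \<in> N" unfolding N_def using xc a
            additive_subgroup.a_inv_closed[OF sM] additive_subgroup.a_inv_closed[OF sL] by blast
      qed
      moreover have "\<forall>s\<in>carrier A. \<forall>x\<in>N. s \<otimes> x \<in> N"
      proof (intro ballI)
        fix s x assume s: "s \<in> carrier A" and "x \<in> N"
        then obtain a m where a: "a \<in> L" "m \<in> M" "x = a \<otimes> r \<oplus> m" and xc: "x \<in> carrier A"
          unfolding N_def by blast
        have ac: "a \<in> carrier A" "m \<in> carrier A" using a Lc Mc by auto
        have "s \<otimes> x = (s \<otimes> a) \<otimes> r \<oplus> (s \<otimes> m)"
          using a ac r s by (simp add: r_distr m_assoc)
        thus "s \<otimes> x \<in> N" unfolding N_def using xc a s Ml Ll by blast
      qed
      ultimately show ?thesis unfolding left_ideal_def by blast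
    qed
    have MN: "M \<subseteq> N"
    proof
      fix m assume m: "m \<in> M"
      have mc: "m \<in> carrier A" using m Mc by blast
      have "m = \<zero> \<otimes> r \<oplus> m" using mc r by simp
      thus "m \<in> N" unfolding N_def using mc m additive_subgroup.zero_closed[OF sL] by blast
    qed
    have "l \<otimes> r \<in> N"
    proof -
      have "l \<otimes> r = l \<otimes> r \<oplus> \<zero>" using lc r by simp
      thus ?thesis unfolding N_def using lc r l additive_subgroup.zero_closed[OF sM] by blast
    qed
    hence "N \<noteq> M" using lr by blast
    hence Nc: "N = carrier A" using Mmax[OF NL MN] by blast
    have "b \<in> L" if b: "b \<in> carrier A" for b
    proof -
      have "b \<otimes> r \<in> N" using Nc b r by simp
      then obtain a m where a: "a \<in> L" "m \<in> M" "b \<otimes> r = a \<otimes> r \<oplus> m" unfolding N_def by blast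
      have ac: "a \<in> carrier A" "m \<in> carrier A" using a Lc Mc by auto
      have "(b \<ominus> a) \<otimes> r = b \<otimes> r \<ominus> a \<otimes> r" using b ac r by (simp add: l_minus a_minus_def l_distr)
      also have "\<dots> = m" using a(3) ac r by (simp add: a_minus_def a_ac r_neg)
      finally have "b \<ominus> a \<in> Q" unfolding Q_def using b ac a(2) by simp
      hence "(b \<ominus> a) \<oplus> a \<in> L" using QsL a(1) additive_subgroup.a_closed[OF sL] by blast
      moreover have "(b \<ominus> a) \<oplus> a = b" using b ac by (simp add: a_minus_def a_assoc l_neg)
      ultimately show ?thesis by simp
    qed
    thus False using Ln Lc by blast
  qed
  thus ?thesis unfolding maximal_left_ideal_def Q_def[symmetric] using QL Qn by blast
qed


lemma jacobson_ideal:
  fixes A (structure)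
  assumes R: "ring A"
  shows "ideal (jacobson_radical A) A"
proof -
  interpret ring A by fact
  have MLi: "left_ideal A M" if "maximal_left_ideal A M" for M
    using that unfolding maximal_left_ideal_def by blast
  show ?thesis
  proof (rule idealI[OF R])
    show "subgroup (jacobson_radical A) (add_monoid A)"
      apply (rule additive_subgroup.a_subgroup, rule addsubI)
      unfolding jacobson_radical_def
      using additive_subgroup.a_closed[OF left_idealD(1)[OF MLi]]
        additive_subgroup.zero_closed[OF left_idealD(1)[OF MLi]]
        additive_subgroup.a_inv_closed[OF left_idealD(1)[OF MLi]] by auto
  next
    fix a x assume a: "a \<in> jacobson_radical A" and x: "x \<in> carrier A"
    have ac: "a \<in> carrier A" and aM: "\<And>M. maximal_left_ideal A M \<Longrightarrow> a \<in> M"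
      using a unfolding jacobson_radical_def by auto
    show "x \<otimes> a \<in> jacobson_radical A"
      unfolding jacobson_radical_def using ac x aM left_idealD(3)[OF MLi] by auto
    have "a \<otimes> x \<in> M" if M: "maximal_left_ideal A M" for M
    proof (cases "x \<in> M")
      case True thus ?thesis using left_idealD(3)[OF MLi[OF M] ac] by blast
    next
      case False
      have "a \<in> {b \<in> carrier A. b \<otimes> x \<in> M}" using aM[OF colon_maximal[OF R M x False]] .
      thus ?thesis by blast
    qed
    thus "a \<otimes> x \<in> jacobson_radical A"
      unfolding jacobson_radical_def using ac x by auto
  qed
qed

lemma maximal_vimage:
  fixes A (structure)
  assumes R: "ring A" and h: "\<phi> \<in> ring_hom A A" and surj: "\<phi> ` carrier A = carrier A"
    and M: "maximal_left_ideal A M"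
  shows "maximal_left_ideal A {x \<in> carrier A. \<phi> x \<in> M}"
proof -
  interpret ring A by fact
  interpret ring_hom_ring A A \<phi> using ring_hom_ringI2[OF R R h] .
  define Q where "Q = {x \<in> carrier A. \<phi> x \<in> M}"
  have MLi: "left_ideal A M" and Mn: "M \<noteq> carrier A"
    and Mmax: "\<And>L. left_ideal A L \<Longrightarrow> M \<subseteq> L \<Longrightarrow> L \<noteq> carrier A \<Longrightarrow> L = M"
    using M unfolding maximal_left_ideal_def by auto
  have Mc: "M \<subseteq> carrier A" using left_idealD(2)[OF MLi] .
  have QL: "left_ideal A Q" unfolding Q_def by (rule vimage_left_ideal[OF R h MLi])
  have Qn: "Q \<noteq> carrier A"
  proof
    assume "Q = carrier A"
    hence "\<one> \<in> M" unfolding Q_def using one_closed hom_one by (metis (no_types, lifting) mem_Collect_eq)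
    thus False using left_ideal_one[OF R MLi] Mn by blast
  qed
  have "L = Q" if L: "left_ideal A L" and QsL: "Q \<subseteq> L" and Ln: "L \<noteq> carrier A" for L
  proof -
    note sL = left_idealD(1)[OF L] and Lc = left_idealD(2)[OF L]
    have IL: "left_ideal A (\<phi> ` L)" by (rule img_left_ideal[OF R h surj L])
    have MsI: "M \<subseteq> \<phi> ` L"
    proof
      fix m assume m: "m \<in> M"
      then obtain x where x: "x \<in> carrier A" "m = \<phi> x" using Mc surj by (metis image_iff subsetD)
      hence "x \<in> Q" unfolding Q_def using m by simp
      thus "m \<in> \<phi> ` L" using QsL x by blast
    qed
    have In: "\<phi> ` L \<noteq> carrier A"
    proof
      assume "\<phi> ` L = carrier A"
      then obtain l where l: "l \<in> L" "\<one> = \<phi> l" using one_closed by (metis imageE)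
      have lc: "l \<in> carrier A" using l Lc by blast
      have "\<phi> (\<one> \<ominus> l) = \<zero>" using lc l(2)[symmetric] by (simp add: a_minus_def r_neg)
      hence "\<one> \<ominus> l \<in> Q" unfolding Q_def using lc additive_subgroup.zero_closed[OF left_idealD(1)[OF MLi]] by simp
      hence "(\<one> \<ominus> l) \<oplus> l \<in> L" using QsL l(1) additive_subgroup.a_closed[OF sL] by blast
      moreover have "(\<one> \<ominus> l) \<oplus> l = \<one>" using lc by (simp add: a_minus_def a_assoc l_neg)
      ultimately have "\<one> \<in> L" by simp
      thus False using left_ideal_one[OF R L] Ln by blast
    qed
    have "\<phi> ` L = M" using Mmax[OF IL MsI In] .
    hence "L \<subseteq> Q" unfolding Q_def using Lc by blast
    thus ?thesis using QsL by blast
  qed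
  thus ?thesis unfolding maximal_left_ideal_def Q_def[symmetric] using QL Qn by blast
qed

lemma jacobson_inv:
  fixes A (structure)
  assumes R: "ring A" and h: "\<phi> \<in> ring_hom A A" and surj: "\<phi> ` carrier A = carrier A"
  shows "\<phi> ` jacobson_radical A \<subseteq> jacobson_radical A"
proof
  fix y assume "y \<in> \<phi> ` jacobson_radical A"
  then obtain x where x: "x \<in> carrier A" "\<forall>M. maximal_left_ideal A M \<longrightarrow> x \<in> M" "y = \<phi> x"
    unfolding jacobson_radical_def by blast
  have "\<phi> x \<in> M" if "maximal_left_ideal A M" for M
    using x(2) maximal_vimage[OF R h surj that] by blast
  moreover have "\<phi> x \<in> carrier A" using ring_hom_closed[OF h x(1)] .
  ultimately show "y \<in> jacobson_radical A" unfolding jacobson_radical_def using x(3) by blast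
qed


theorem mainTheorem9:
  fixes A :: "('a, 'b) ring_scheme" and J :: "'a set" and \<phi> :: "'a \<Rightarrow> 'a"
  assumes "ring A"
    and "J = prime_radical A \<or> is_upper_nilradical A J \<or> J = jacobson_radical A"
    and "\<phi> \<in> ring_hom A A"
    and "\<phi> ` carrier A = carrier A"
    and "hopfian (A Quot J)"
  shows "a_kernel A A \<phi> \<subseteq> J"
proof -
  have "ideal J A \<and> \<phi> ` J \<subseteq> J"
    using assms(2)
  proof (elim disjE)
    assume e: "J = prime_radical A"
    show ?thesis unfolding e using prime_radical_ideal[OF assms(1)] prime_radical_inv[OF assms(1,3,4)] by (rule conjI)
  next
    assume "is_upper_nilradical A J"
    hence "ideal J A" unfolding is_upper_nilradical_def by (rule conjunct1)
    thus ?thesis using nil_inv[OF assms(1,3,4) \<open>is_upper_nilradical A J\<close>] by (rule conjI)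
  next
    assume e: "J = jacobson_radical A"
    show ?thesis unfolding e using jacobson_ideal[OF assms(1)] jacobson_inv[OF assms(1,3,4)] by (rule conjI)
  qed
  hence I: "ideal J A" and inv: "\<phi> ` J \<subseteq> J" by (rule conjunct1, rule conjunct2)
  show ?thesis by (rule hopf_reduce[OF assms(1) I assms(3,4) inv assms(5)])
qed

end
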